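(* Let $\mathcal{B}_q=\{f\in\operatorname{End}_KV^{\otimes r}:\pi_r(T'_i)f=f\pi_r(T'_i)\ \text{for } i=1,\dots,r-1\}$, $\mathcal{B}_q^\dagger=\{f\in\operatorname{End}_KV^{\otimes r}:\pi_r(T'_i)f=-f\pi_r(T'_i)\ \text{for } i=1,\dots,r-1\}$ and $\mathcal{D}_q=\{f\in\operatorname{End}_KV^{\otimes r}:\pi_r(T'_1T'_{i+1})f=f\pi_r(T'_1T'_{i+1})\ \text{for } i=1,\dots,r-2\}$. Then $\mathcal{D}_q=\mathcal{B}_q\oplus\mathcal{B}_q^\dagger$.
   Context: $q$ is an indeterminate, $K=\mathbb{Q}(q)$, $r\ge2$, $m,n\ge0$ with $m+n\ge1$. $V$ is a $\mathbb{Z}_2$-graded $K$-vector space with basis $v_1,\dots,v_{m+n}$, where $|v_k|=0$ for $k\le m$ and $|v_k|=1$ for $k>m$. $T'$ is the operator on $V\otimes V$ given by $T'(v_k\otimes v_k)=(-1)^{|v_k|}v_k\otimes v_k$; for $k<l$, $T'(v_k\otimes v_l)=\frac{2(-1)^{|v_k||v_l|}}{q+q^{-1}}v_l\otimes v_k+\frac{q-q^{-1}}{q+q^{-1}}v_k\otimes v_l$; for $k>l$, $T'(v_k\otimes v_l)=\frac{2(-1)^{|v_k||v_l|}}{q+q^{-1}}v_l\otimes v_k-\frac{q-q^{-1}}{q+q^{-1}}v_k\otimes v_l$. The $q$-permutation representation $\pi_r$ of the Iwahori–Hecke algebra $\mathcal{H}_{K,r}(q)$ (generators $T_i$, $T_i^2=(q-q^{-1})T_i+1$,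 braid relations) on $V^{\otimes r}$ is the representation with $\pi_r(T'_i)=\mathrm{Id}^{\otimes i-1}\otimes T'\otimes\mathrm{Id}^{\otimes r-i-1}$, where $T'_i=\frac{2T_i-(q-q^{-1})}{q+q^{-1}}$. *)

theory Defs
  imports "HOL-Computational_Algebra.Polynomial" "HOL-Computational_Algebra.Fraction_Field"
begin

text \<open>The field K = Q(q): fractions of rational polynomials; q is the indeterminate.\<close>
type_synonym K = "rat poly fract"

definition qK :: K where "qK = Fract [:0, 1:] 1"

text \<open>Basis vectors v_1..v_(m+n) are indexed 0..m+n-1 here; index k is even iff k < m.
  sgnK m k = (-1)^|v_k|, sgn2 m k l = (-1)^(|v_k| |v_l|).\<close>
definition par :: "nat \<Rightarrow> nat \<Rightarrow> nat" where "par m k = (if k < m then 0 else 1)"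

definition sgn2 :: "nat \<Rightarrow> nat \<Rightarrow> nat \<Rightarrow> K" where
  "sgn2 m k l = (-1) ^ (par m k * par m l)"

text \<open>Tcoef m a b k l = coefficient of v_a \<otimes> v_b in T'(v_k \<otimes> v_l).\<close>
definition Tcoef :: "nat \<Rightarrow> nat \<Rightarrow> nat \<Rightarrow> nat \<Rightarrow> nat \<Rightarrow> K" where
  "Tcoef m a b k l =
    (if k = l then (if a = k \<and> b = l then (-1) ^ par m k else 0)
     else if k < l then
       (if a = l \<and> b = k then 2 * sgn2 m k l / (qK + inverse qK)
        else if a = k \<and> b = l then (qK - inverse qK) / (qK + inverse qK) else 0)
     else
       (if a = l \<and> b = k then 2 * sgn2 m k l / (qK + inverse qK)
        else if a = k \<and> b = l then - (qK - inverse qK) / (qK + inverse qK) else 0))"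

text \<open>Basis of V^{\<otimes>r}: words of length r over {0..<N}, N = m+n.
  K-endomorphisms of V^{\<otimes>r} are represented by their matrices w.r.t. this basis:
  functions f u w (row u = output, column w = input) vanishing outside words.\<close>
definition words :: "nat \<Rightarrow> nat \<Rightarrow> nat list set" where
  "words N r = {w. length w = r \<and> set w \<subseteq> {..<N}}"

definition is_end :: "nat \<Rightarrow> nat \<Rightarrow> (nat list \<Rightarrow> nat list \<Rightarrow> K) \<Rightarrow> bool" where
  "is_end N r f \<longleftrightarrow> (\<forall>u w. u \<notin> words N r \<or> w \<notin> words N r \<longrightarrow> f u w = 0)"

definition mmul :: "nat \<Rightarrow> nat \<Rightarrow> (nat list \<Rightarrow> nat list \<Rightarrow> K) \<Rightarrow> (nat list \<Rightarrow> nat list \<Rightarrow> K)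
    \<Rightarrow> (nat list \<Rightarrow> nat list \<Rightarrow> K)" where
  "mmul N r f g = (\<lambda>u w. \<Sum>v\<in>words N r. f u v * g v w)"

text \<open>Matrix of pi_r(T'_i) = Id^{\<otimes>(i-1)} \<otimes> T' \<otimes> Id^{\<otimes>(r-i-1)}, 1 \<le> i \<le> r-1,
  acting on tensor positions i and i+1 (0-based positions i-1 and i).\<close>
definition piT :: "nat \<Rightarrow> nat \<Rightarrow> nat \<Rightarrow> nat \<Rightarrow> (nat list \<Rightarrow> nat list \<Rightarrow> K)" where
  "piT m n r i = (\<lambda>u w.
     if u \<in> words (m + n) r \<and> w \<in> words (m + n) r \<and>
        (\<forall>j<r. j \<noteq> i - 1 \<and> j \<noteq> i \<longrightarrow> u ! j = w ! j)
     then Tcoef m (u ! (i - 1)) (u ! i) (w ! (i - 1)) (w ! i) else 0)"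

definition Bq :: "nat \<Rightarrow> nat \<Rightarrow> nat \<Rightarrow> (nat list \<Rightarrow> nat list \<Rightarrow> K) set" where
  "Bq m n r = {f. is_end (m + n) r f \<and>
     (\<forall>i\<in>{1..r - 1}. mmul (m + n) r (piT m n r i) f = mmul (m + n) r f (piT m n r i))}"

definition Bq_dag :: "nat \<Rightarrow> nat \<Rightarrow> nat \<Rightarrow> (nat list \<Rightarrow> nat list \<Rightarrow> K) set" where
  "Bq_dag m n r = {f. is_end (m + n) r f \<and>
     (\<forall>i\<in>{1..r - 1}. mmul (m + n) r (piT m n r i) f =
        (\<lambda>u w. - mmul (m + n) r f (piT m n r i) u w))}"

definition Dq :: "nat \<Rightarrow> nat \<Rightarrow> nat \<Rightarrow> (nat list \<Rightarrow> nat list \<Rightarrow> K) set" where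
  "Dq m n r = {f. is_end (m + n) r f \<and>
     (\<forall>i\<in>{1..r - 2}.
        let P = mmul (m + n) r (piT m n r 1) (piT m n r (i + 1))
        in mmul (m + n) r P f = mmul (m + n) r f P)}"

end

theory Submission
  imports Defs
begin

lemma qK_ne: "qK \<noteq> 0" unfolding qK_def by (simp add: Zero_fract_def eq_fract)
lemma qK_D: "qK + inverse qK \<noteq> 0"
proof
  assume h: "qK + inverse qK = 0"
  have "qK * (qK + inverse qK) = qK*qK + 1" using qK_ne by (simp add: field_simps)
  with h have "qK*qK + 1 = 0" by simp
  moreover have "qK*qK + 1 = Fract ([:0,1:]*[:0,1:] + 1) 1" unfolding qK_def by (simp add: One_fract_def)
  moreover have "coeff ([:0,1:]*[:0,1:] + 1) 2 = (1::rat)" by (simp add: coeff_add coeff_1 numeral_2_eq_2)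
  ultimately show False by (auto simp add: Zero_fract_def eq_fract)
qed
lemma alg: "(x::K) \<noteq> 0 \<Longrightarrow> x + inverse x \<noteq> 0 \<Longrightarrow> ((x - inverse x)/(x+inverse x))^2 + 4/(x+inverse x)^2 = 1"
proof -
  assume x: "x \<noteq> 0" and d: "x + inverse x \<noteq> 0"
  have e1: "x + inverse x = (x*x+1)/x" using x by (simp add: field_simps)
  have e2: "x - inverse x = (x*x-1)/x" using x by (simp add: field_simps)
  have n: "x*x+1 \<noteq> 0" using d e1 by auto
  have a1: "(x - inverse x)/(x+inverse x) = (x*x-1)/(x*x+1)" unfolding e1 e2 using x n by simp
  have a2: "4/(x+inverse x)^2 = 4*(x*x)/((x*x+1)^2)" unfolding e1 using x n by (simp add: power2_eq_square)
  have "((x*x-1)/(x*x+1))^2 + 4*(x*x)/((x*x+1)^2) = ((x*x-1)^2 + 4*(x*x))/(x*x+1)^2"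
    by (simp add: power_divide add_divide_distrib)
  also have "(x*x-1)^2 + 4*(x*x) = (x*x+1)^2" by (simp add: power2_eq_square algebra_simps)
  finally show ?thesis using a1 a2 n by simp
qed


abbreviation DD where "DD \<equiv> qK + inverse qK"

lemma sgn2_sq: "sgn2 m l k * sgn2 m k l = 1"
  unfolding sgn2_def by (simp add: mult.commute power_add[symmetric] flip: mult_2)

lemma Tcoef_sw: "k \<noteq> l \<Longrightarrow> Tcoef m k l l k = 2 * sgn2 m l k / DD"
  unfolding Tcoef_def by simp

lemma Tswap: "k \<noteq> l \<Longrightarrow> Tcoef m k l l k * Tcoef m l k k l = 4 / DD^2"
proof -
  assume kl: "k \<noteq> l"
  have "Tcoef m k l l k * Tcoef m l k k l = 4 * (sgn2 m l k * sgn2 m k l) / DD^2"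
    using Tcoef_sw[OF kl, of m] Tcoef_sw[of l k m] kl by (simp add: power2_eq_square)
  then show ?thesis using sgn2_sq by simp
qed

definition cK :: K where "cK = (qK - inverse qK) / DD"

lemma Tcoef_same: "k \<noteq> l \<Longrightarrow> Tcoef m k l k l = (if k < l then cK else - cK)"
  unfolding Tcoef_def cK_def by (simp add: minus_divide_left)

lemma TA: "k \<noteq> l \<Longrightarrow> Tcoef m k l k l ^2 + Tcoef m k l l k * Tcoef m l k k l = 1"
proof -
  assume kl: "k \<noteq> l"
  have "Tcoef m k l k l ^2 = cK^2"
    using Tcoef_same[OF kl, of m] by (cases "k < l") (simp_all add: power2_eq_square)
  then show ?thesis using Tswap[OF kl, of m] alg[OF qK_ne qK_D] unfolding cK_def by simp
qed

lemma TB: "k \<noteq> l \<Longrightarrow> Tcoef m l k k l * Tcoef m k l k l + Tcoef m l k l k * Tcoef m l k k l = 0"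
proof -
  assume kl: "k \<noteq> l"
  have "Tcoef m l k l k = - Tcoef m k l k l"
    using Tcoef_same[OF kl, of m] Tcoef_same[of l k m] kl by (cases "k < l") simp_all
  then show ?thesis by (simp add: algebra_simps)
qed


lemma Tdiag: "Tcoef m k k k k * Tcoef m k k k k = 1"
proof -
  have "Tcoef m k k k k = (-1) ^ par m k" unfolding Tcoef_def by simp
  moreover have "((-1::K) ^ par m k) * (-1) ^ par m k = 1" by (simp add: power_mult_distrib[symmetric])
  ultimately show ?thesis by simp
qed

lemma Tnz: "Tcoef m a b k l \<noteq> 0 \<Longrightarrow> (a = k \<and> b = l) \<or> (a = l \<and> b = k)"
proof (rule ccontr)
  assume a1: "Tcoef m a b k l \<noteq> 0" and a2: "\<not> ((a = k \<and> b = l) \<or> (a = l \<and> b = k))"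
  have h1: "(a = k \<and> b = l) = False" "(a = l \<and> b = k) = False" using a2 by auto
  have "Tcoef m a b k l = 0" unfolding Tcoef_def by (simp only: h1 if_False if_cancel)
  then show False using a1 by simp
qed
definition swp :: "nat \<Rightarrow> nat list \<Rightarrow> nat list" where
  "swp i w = w[i-1 := w!i, i := w!(i-1)]"

lemma swp_len[simp]: "length (swp i w) = length w" by (simp add: swp_def)

lemma swp_nth:
  assumes "1 \<le> i" "i < length w"
  shows "swp i w ! (i-1) = w ! i" "swp i w ! i = w ! (i-1)"
    "j \<noteq> i-1 \<Longrightarrow> j \<noteq> i \<Longrightarrow> swp i w ! j = w ! j"
  using assms by (auto simp: swp_def nth_list_update)

lemma swp_nth_gen: "1 \<le> i \<Longrightarrow> i < length w \<Longrightarrow> j < length w \<Longrightarrow>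
  swp i w ! j = (if j = i then w!(i-1) else if j = i-1 then w!i else w!j)"
  by (auto simp: swp_def nth_list_update)

lemma swp_words: "1 \<le> i \<Longrightarrow> i < r \<Longrightarrow> w \<in> words N r \<Longrightarrow> swp i w \<in> words N r"
  unfolding words_def swp_def
  by (auto simp: set_update_subset_insert[THEN subsetD] dest!: set_update_subset_insert[THEN subsetD])

lemma swp_swp: "1 \<le> i \<Longrightarrow> i < length w \<Longrightarrow> swp i (swp i w) = w"
  by (rule nth_equalityI) (auto simp: swp_nth_gen)

lemma swp_id: "1 \<le> i \<Longrightarrow> i < length w \<Longrightarrow> w!(i-1) = w!i \<Longrightarrow> swp i w = w"
  by (rule nth_equalityI) (auto simp: swp_nth_gen)

lemma piT_nz:
  assumes "piT m n r i u v \<noteq> 0" "1 \<le> i" "i < r"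
  shows "u = v \<or> u = swp i v"
proof -
  have uv: "u \<in> words (m+n) r" "v \<in> words (m+n) r"
    and ag: "\<forall>j<r. j \<noteq> i - 1 \<and> j \<noteq> i \<longrightarrow> u ! j = v ! j"
    and t: "Tcoef m (u ! (i - 1)) (u ! i) (v ! (i - 1)) (v ! i) \<noteq> 0"
    using assms(1) unfolding piT_def by (auto split: if_splits)
  have len: "length u = r" "length v = r" using uv by (auto simp: words_def)
  from Tnz[OF t] show ?thesis
  proof
    assume h: "u ! (i - 1) = v ! (i - 1) \<and> u ! i = v ! i"
    have "u = v" by (rule nth_equalityI) (use len ag h in auto)
    then show ?thesis ..
  next
    assume h: "u ! (i - 1) = v ! i \<and> u ! i = v ! (i - 1)"
    have "u = swp i v"
      by (rule nth_equalityI) (use len ag h assms(2,3) in \<open>auto simp: swp_nth_gen\<close>)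
    then show ?thesis ..
  qed
qed

lemma piT_val:
  assumes "u \<in> words (m+n) r" "v \<in> words (m+n) r" "\<forall>j<r. j \<noteq> i - 1 \<and> j \<noteq> i \<longrightarrow> u ! j = v ! j"
  shows "piT m n r i u v = Tcoef m (u ! (i - 1)) (u ! i) (v ! (i - 1)) (v ! i)"
  using assms unfolding piT_def by auto

lemma finite_words: "finite (words N r)"
proof -
  have "words N r = {xs. set xs \<subseteq> {..<N} \<and> length xs = r}" unfolding words_def by auto
  then show ?thesis using finite_lists_length_eq[of "{..<N}" r] by simp
qed

definition Idm :: "nat \<Rightarrow> nat \<Rightarrow> nat list \<Rightarrow> nat list \<Rightarrow> K" where
  "Idm N r = (\<lambda>u w. if u \<in> words N r \<and> u = w then 1 else 0)"

lemma piT_sq: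
  assumes i: "1 \<le> i" "i < r"
  shows "mmul (m+n) r (piT m n r i) (piT m n r i) = Idm (m+n) r"
proof (intro ext)
  fix u w
  let ?W = "words (m+n) r"
  let ?P = "piT m n r i"
  show "mmul (m+n) r ?P ?P u w = Idm (m+n) r u w"
  proof (cases "w \<in> ?W")
    case False
    then have "\<And>v. ?P v w = 0" unfolding piT_def by auto
    then show ?thesis using False unfolding mmul_def Idm_def by auto
  next
    case wW: True
    define s where "s = swp i w"
    have sW: "s \<in> ?W" unfolding s_def using swp_words[OF i wW] .
    have lw: "length w = r" using wW by (simp add: words_def)
    have sub: "{w, s} \<subseteq> ?W" using wW sW by auto
    have sum: "mmul (m+n) r ?P ?P u w = (\<Sum>v\<in>{w,s}. ?P u v * ?P v w)"
      unfolding mmul_def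
      by (rule sum.mono_neutral_right[OF finite_words sub])
         (auto dest: piT_nz[OF _ i] simp: s_def)
    define k where "k = w!(i-1)"
    define l where "l = w!i"
    have sk: "s!(i-1) = l" "s!i = k" unfolding s_def k_def l_def using swp_nth i lw by auto
    have ag: "\<forall>j<r. j \<noteq> i - 1 \<and> j \<noteq> i \<longrightarrow> s ! j = w ! j" unfolding s_def using swp_nth i lw by auto
    have ag': "\<forall>j<r. j \<noteq> i - 1 \<and> j \<noteq> i \<longrightarrow> w ! j = s ! j" using ag by auto
    have agr: "\<forall>j<r. j \<noteq> i - 1 \<and> j \<noteq> i \<longrightarrow> x ! j = x ! j" for x by auto
    have Pww: "?P w w = Tcoef m k l k l" using piT_val[OF wW wW agr] k_def l_def by simp
    have Pws: "?P w s = Tcoef m k l l k" using piT_val[OF wW sW ag'] k_def l_def sk by simp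
    have Psw: "?P s w = Tcoef m l k k l" using piT_val[OF sW wW ag] k_def l_def sk by simp
    have Pss: "?P s s = Tcoef m l k l k" using piT_val[OF sW sW agr] sk by simp
    show ?thesis
    proof (cases "k = l")
      case True
      then have sw: "s = w" unfolding s_def k_def l_def using swp_id i lw by auto
      show ?thesis
      proof (cases "u = w")
        case True
        then show ?thesis using sum sw Pww \<open>k = l\<close> Tdiag wW by (simp add: Idm_def)
      next
        case False
        then have "?P u w = 0" using piT_nz[OF _ i, of m n u w] sw s_def by auto
        then show ?thesis using sum sw False by (simp add: Idm_def)
      qed
    next
      case False
      then have sw: "s \<noteq> w" using sk k_def by auto
      have sum2: "mmul (m+n) r ?P ?P u w = ?P u w * ?P w w + ?P u s * ?P s w"
        using sum sw by simp
      consider "u = w" | "u = s" | "u \<noteq> w" "u \<noteq> s" by blast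
      then show ?thesis
      proof cases
        case 1
        then show ?thesis using sum2 Pww Pws Psw TA[OF False, of m] wW
          by (simp add: Idm_def power2_eq_square)
      next
        case 2
        then show ?thesis using sum2 Pww Pss Psw TB[OF False, of m] sw
          by (simp add: Idm_def)
      next
        case 3
        have ss: "swp i s = w" unfolding s_def using swp_swp i lw by auto
        have "?P u w = 0" using piT_nz[OF _ i, of m n u w] 3 s_def by auto
        moreover have "?P u s = 0" using piT_nz[OF _ i, of m n u s] 3 ss by auto
        ultimately show ?thesis using sum2 3 by (simp add: Idm_def)
      qed
    qed
  qed
qed


lemma mmul_assoc: "mmul N r (mmul N r f g) h = mmul N r f (mmul N r g h)"
proof (intro ext)
  fix u w
  have "mmul N r (mmul N r f g) h u w = (\<Sum>v\<in>words N r. \<Sum>x\<in>words N r. f u x * g x v * h v w)"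
    unfolding mmul_def by (simp add: sum_distrib_right)
  also have "\<dots> = (\<Sum>x\<in>words N r. \<Sum>v\<in>words N r. f u x * g x v * h v w)"
    by (rule sum.swap)
  also have "\<dots> = mmul N r f (mmul N r g h) u w"
    unfolding mmul_def by (simp add: sum_distrib_left mult.assoc)
  finally show "mmul N r (mmul N r f g) h u w = mmul N r f (mmul N r g h) u w" .
qed

lemma mmul_Id_left: "is_end N r f \<Longrightarrow> mmul N r (Idm N r) f = f"
proof (intro ext)
  fix u w assume e: "is_end N r f"
  have "mmul N r (Idm N r) f u w = (\<Sum>v\<in>words N r. if v = u then f v w else 0)"
    unfolding mmul_def Idm_def by (intro sum.cong) auto
  also have "\<dots> = f u w" using e unfolding is_end_def by (simp add: sum.delta[OF finite_words])
  finally show "mmul N r (Idm N r) f u w = f u w" .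
qed

lemma mmul_Id_right: "is_end N r f \<Longrightarrow> mmul N r f (Idm N r) = f"
proof (intro ext)
  fix u w assume e: "is_end N r f"
  have "mmul N r f (Idm N r) u w = (\<Sum>v\<in>words N r. if v = w then f u v else 0)"
    unfolding mmul_def Idm_def by (intro sum.cong) auto
  also have "\<dots> = f u w" using e unfolding is_end_def by (simp add: sum.delta[OF finite_words])
  finally show "mmul N r f (Idm N r) u w = f u w" .
qed

lemma is_end_mmul: "is_end N r f \<Longrightarrow> is_end N r g \<Longrightarrow> is_end N r (mmul N r f g)"
  unfolding is_end_def mmul_def by auto

lemma is_end_piT: "is_end (m+n) r (piT m n r i)"
  unfolding is_end_def piT_def by auto

lemma mmul_lin_right: "mmul N r A (\<lambda>u w. a * f u w + b * g u w) = (\<lambda>u w. a * mmul N r A f u w + b * mmul N r A g u w)"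
  unfolding mmul_def by (intro ext) (simp add: sum.distrib sum_distrib_left algebra_simps)

lemma mmul_lin_left: "mmul N r (\<lambda>u w. a * f u w + b * g u w) A = (\<lambda>u w. a * mmul N r f A u w + b * mmul N r g A u w)"
  unfolding mmul_def by (intro ext) (simp add: sum.distrib sum_distrib_left algebra_simps)

lemma mmul_add_right: "mmul N r A (\<lambda>u w. f u w + g u w) = (\<lambda>u w. mmul N r A f u w + mmul N r A g u w)"
  unfolding mmul_def by (intro ext) (simp add: sum.distrib algebra_simps)

lemma mmul_neg_right: "mmul N r A (\<lambda>u w. - f u w) = (\<lambda>u w. - mmul N r A f u w)"
  unfolding mmul_def by (intro ext) (simp add: sum_negf)

lemma mmul_neg_left: "mmul N r (\<lambda>u w. - f u w) A = (\<lambda>u w. - mmul N r f A u w)"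
  unfolding mmul_def by (intro ext) (simp add: sum_negf)

lemma mmul_zero_left: "mmul N r (\<lambda>u w. 0) A = (\<lambda>u w. 0)"
  unfolding mmul_def by simp

lemma mmul_zero_right: "mmul N r A (\<lambda>u w. 0) = (\<lambda>u w. 0)"
  unfolding mmul_def by simp


lemma mmul_add_left: "mmul N r (\<lambda>u w. f u w + g u w) A = (\<lambda>u w. mmul N r f A u w + mmul N r g A u w)"
  unfolding mmul_def by (intro ext) (simp add: sum.distrib algebra_simps)

lemma key_i:
  assumes PP: "mmul N r P P = Idm N r" and QQ: "mmul N r Q Q = Idm N r"
    and eP: "is_end N r P" and eQ: "is_end N r Q" and ef: "is_end N r f"
    and comm: "mmul N r (mmul N r P Q) f = mmul N r f (mmul N r P Q)"
  shows "mmul N r Q f = mmul N r (mmul N r P (mmul N r f P)) Q"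
    and "mmul N r Q (mmul N r P (mmul N r f P)) = mmul N r f Q"
proof -
  let ?M = "mmul N r"
  have ePf: "is_end N r (?M Q f)" using eQ ef by (rule is_end_mmul)
  have k1: "?M Q f = ?M (?M P (?M f P)) Q"
  proof -
    have "?M Q f = ?M (?M P P) (?M Q f)" using PP mmul_Id_left[OF ePf] by simp
    also have "\<dots> = ?M P (?M (?M P Q) f)" by (simp add: mmul_assoc)
    also have "\<dots> = ?M P (?M f (?M P Q))" using comm by simp
    also have "\<dots> = ?M (?M P (?M f P)) Q" by (simp add: mmul_assoc)
    finally show ?thesis .
  qed
  show "?M Q f = ?M (?M P (?M f P)) Q" by (rule k1)
  have eg: "is_end N r (?M P (?M f P))" using eP ef by (intro is_end_mmul)
  have "?M Q (?M P (?M f P)) = ?M Q (?M (?M P (?M f P)) (?M Q Q))" using QQ mmul_Id_right[OF eg] by simp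
  also have "\<dots> = ?M Q (?M (?M Q f) Q)" using k1 by (simp add: mmul_assoc)
  also have "\<dots> = ?M (?M Q Q) (?M f Q)" by (simp add: mmul_assoc)
  also have "\<dots> = ?M f Q" using QQ mmul_Id_left[OF is_end_mmul[OF ef eQ]] by simp
  finally show "?M Q (?M P (?M f P)) = ?M f Q" .
qed

lemma key_1:
  assumes PP: "mmul N r P P = Idm N r" and eP: "is_end N r P" and ef: "is_end N r f"
  shows "mmul N r P f = mmul N r (mmul N r P (mmul N r f P)) P"
    and "mmul N r P (mmul N r P (mmul N r f P)) = mmul N r f P"
proof -
  let ?M = "mmul N r"
  have "?M (?M P (?M f P)) P = ?M P (?M f (?M P P))" by (simp add: mmul_assoc)
  also have "\<dots> = ?M P f" using PP mmul_Id_right[OF ef] by simp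
  finally show "?M P f = ?M (?M P (?M f P)) P" by simp
  have "?M P (?M P (?M f P)) = ?M (?M P P) (?M f P)" by (simp add: mmul_assoc)
  also have "\<dots> = ?M f P" using PP mmul_Id_left[OF is_end_mmul[OF ef eP]] by simp
  finally show "?M P (?M P (?M f P)) = ?M f P" .
qed

theorem lemma5p1:
  fixes m n r :: nat
  assumes "r \<ge> 2" and "m + n \<ge> 1"
  shows "Dq m n r = {(\<lambda>u w. f u w + g u w) | f g. f \<in> Bq m n r \<and> g \<in> Bq_dag m n r}
    \<and> Bq m n r \<inter> Bq_dag m n r = {(\<lambda>u w. 0)}"
proof -
  let ?M = "mmul (m+n) r"
  let ?T = "piT m n r"
  let ?P = "piT m n r 1"
  have sq: "?M (?T i) (?T i) = Idm (m+n) r" if "i \<in> {1..r-1}" for i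
    using piT_sq[of i r m n] that assms(1) by auto
  have PP: "?M ?P ?P = Idm (m+n) r" using sq[of 1] assms(1) by auto
  have eT: "is_end (m+n) r (?T i)" for i by (rule is_end_piT)
  have S1: "Dq m n r \<subseteq> {(\<lambda>u w. f u w + g u w) | f g. f \<in> Bq m n r \<and> g \<in> Bq_dag m n r}"
  proof
    fix f assume fD: "f \<in> Dq m n r"
    have ef: "is_end (m+n) r f" using fD by (simp add: Dq_def)
    have comm: "?M (?M ?P (?T (j+1))) f = ?M f (?M ?P (?T (j+1)))" if "j \<in> {1..r-2}" for j
      using fD that by (simp add: Dq_def Let_def)
    define g where "g = ?M ?P (?M f ?P)"
    have eg: "is_end (m+n) r g" unfolding g_def using eT ef by (intro is_end_mmul)
    have keys: "?M (?T i) f = ?M g (?T i) \<and> ?M (?T i) g = ?M f (?T i)" if i: "i \<in> {1..r-1}" for i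
    proof (cases "i = 1")
      case True
      then show ?thesis using key_1[OF PP eT ef] unfolding g_def by simp
    next
      case False
      then obtain j where j: "i = j + 1" "j \<in> {1..r-2}" using i by (cases i) auto
      show ?thesis using key_i[OF PP sq[OF i] eT eT ef] comm[OF j(2)] j(1) unfolding g_def by simp
    qed
    define fp where "fp = (\<lambda>u w. (1/2) * f u w + (1/2) * g u w)"
    define fm where "fm = (\<lambda>u w. (1/2) * f u w + (-1/2) * g u w)"
    have "f = (\<lambda>u w. fp u w + fm u w)" unfolding fp_def fm_def by (intro ext) (simp add: algebra_simps)
    moreover have "fp \<in> Bq m n r"
    proof -
      have "is_end (m+n) r fp" using ef eg unfolding fp_def is_end_def by auto
      moreover have "?M (?T i) fp = ?M fp (?T i)" if "i \<in> {1..r-1}" for i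
        using keys[OF that] unfolding fp_def mmul_lin_left mmul_lin_right
        by (intro ext) (simp add: algebra_simps)
      ultimately show ?thesis unfolding Bq_def by auto
    qed
    moreover have "fm \<in> Bq_dag m n r"
    proof -
      have "is_end (m+n) r fm" using ef eg unfolding fm_def is_end_def by auto
      moreover have "?M (?T i) fm = (\<lambda>u w. - ?M fm (?T i) u w)" if "i \<in> {1..r-1}" for i
        using keys[OF that] unfolding fm_def mmul_lin_left mmul_lin_right
        by (intro ext) (simp add: algebra_simps)
      ultimately show ?thesis unfolding Bq_dag_def by auto
    qed
    ultimately show "f \<in> {(\<lambda>u w. f u w + g u w) | f g. f \<in> Bq m n r \<and> g \<in> Bq_dag m n r}" by blast
  qed
  have S2: "{(\<lambda>u w. f u w + g u w) | f g. f \<in> Bq m n r \<and> g \<in> Bq_dag m n r} \<subseteq> Dq m n r"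
  proof
    fix h assume "h \<in> {(\<lambda>u w. f u w + g u w) | f g. f \<in> Bq m n r \<and> g \<in> Bq_dag m n r}"
    then obtain f g where h: "h = (\<lambda>u w. f u w + g u w)" and f: "f \<in> Bq m n r" and g: "g \<in> Bq_dag m n r" by blast
    have ef: "is_end (m+n) r f" and fc: "\<And>i. i \<in> {1..r-1} \<Longrightarrow> ?M (?T i) f = ?M f (?T i)"
      using f by (auto simp: Bq_def)
    have eg: "is_end (m+n) r g" and gc: "\<And>i. i \<in> {1..r-1} \<Longrightarrow> ?M (?T i) g = (\<lambda>u w. - ?M g (?T i) u w)"
      using g by (auto simp: Bq_dag_def)
    have "is_end (m+n) r h" using ef eg unfolding h is_end_def by auto
    moreover have "?M (?M ?P (?T (j+1))) h = ?M h (?M ?P (?T (j+1)))" if j: "j \<in> {1..r-2}" for j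
    proof -
      let ?Q = "?T (j+1)"
      have i1: "1 \<in> {1..r-1}" and i2: "j+1 \<in> {1..r-1}" using j assms(1) by auto
      have A: "?M (?M ?P ?Q) f = ?M f (?M ?P ?Q)"
      proof -
        have "?M (?M ?P ?Q) f = ?M ?P (?M f ?Q)" using fc[OF i2] by (simp add: mmul_assoc)
        also have "\<dots> = ?M (?M ?P f) ?Q" by (simp add: mmul_assoc)
        also have "\<dots> = ?M f (?M ?P ?Q)" using fc[OF i1] by (simp add: mmul_assoc)
        finally show ?thesis .
      qed
      have B: "?M (?M ?P ?Q) g = ?M g (?M ?P ?Q)"
      proof -
        have "?M (?M ?P ?Q) g = ?M ?P (\<lambda>u w. - ?M g ?Q u w)" using gc[OF i2] by (simp add: mmul_assoc)
        also have "\<dots> = (\<lambda>u w. - ?M (?M ?P g) ?Q u w)" by (simp add: mmul_neg_right mmul_assoc)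
        also have "\<dots> = (\<lambda>u w. - ?M (\<lambda>u w. - ?M g ?P u w) ?Q u w)" using gc[OF i1] by simp
        also have "\<dots> = ?M g (?M ?P ?Q)" by (simp add: mmul_neg_left mmul_assoc)
        finally show ?thesis .
      qed
      show ?thesis unfolding h mmul_add_right mmul_add_left using A B by simp
    qed
    ultimately show "h \<in> Dq m n r" unfolding Dq_def Let_def by auto
  qed
  have S3: "Bq m n r \<inter> Bq_dag m n r = {(\<lambda>u w. 0)}"
  proof
    show "Bq m n r \<inter> Bq_dag m n r \<subseteq> {(\<lambda>u w. 0)}"
    proof
      fix f assume f: "f \<in> Bq m n r \<inter> Bq_dag m n r"
      have i1: "1 \<in> {1..r-1}" using assms(1) by auto
      have ef: "is_end (m+n) r f" using f by (simp add: Bq_def)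
      have c1: "?M ?P f = ?M f ?P" and c2: "?M ?P f = (\<lambda>u w. - ?M f ?P u w)"
        using f i1 by (auto simp: Bq_def Bq_dag_def)
      have z: "?M f ?P = (\<lambda>u w. 0)"
      proof (intro ext)
        fix u w
        have "?M f ?P u w = - ?M f ?P u w" using fun_cong[OF fun_cong[OF c2, of u], of w] c1 by simp
        then show "?M f ?P u w = 0" by simp
      qed
      have "f = ?M f (?M ?P ?P)" using PP mmul_Id_right[OF ef] by simp
      also have "\<dots> = ?M (?M f ?P) ?P" by (simp add: mmul_assoc)
      also have "\<dots> = (\<lambda>u w. 0)" using z mmul_zero_left by simp
      finally show "f \<in> {(\<lambda>u w. 0)}" by simp
    qed
    show "{(\<lambda>u w. 0)} \<subseteq> Bq m n r \<inter> Bq_dag m n r"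
      by (simp add: Bq_def Bq_dag_def is_end_def mmul_zero_left mmul_zero_right)
  qed
  show ?thesis using S1 S2 S3 by blast
qed
end
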